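(* Let $f:\widetilde{\mathbb C}\to\widetilde{\mathbb C}$ be a generalized holomorphic function which is generalized entire, and assume $f$ is bounded: there exists $M\in\widetilde{\mathbb R}_{>0}$ with $|f(z)|<M$ for all $z\in\widetilde{\mathbb C}$. Then $f$ is constant.
   Context: Fix $I=(0,1]$ and a gauge $\rho=(\rho_\varepsilon)_{\varepsilon\in I}$ with $\rho_\varepsilon\in I$ and $\rho_\varepsilon\to0$ as $\varepsilon\to0$. "$\forall^0\varepsilon$" means "for all sufficiently small $\varepsilon\in I$". A net $(x_\varepsilon)\in\mathbb C^I$ is $\rho$-moderate ($(x_\varepsilon)\in\mathbb C_\rho$) if $\exists N\in\mathbb N\,\forall^0\varepsilon:|x_\varepsilon|\le\rho_\varepsilon^{-N}$, and $\rho$-negligible if $\forall q\in\mathbb N\,\forall^0\varepsilon:|x_\varepsilon|\le\rho_\varepsilon^q$. $\widetilde{\mathbb C}:=\mathbb C_\rho/\{\text{negligible nets}\}$ with classes $[x_\varepsilon]$; $\widetilde{\mathbb R}\subseteq\widetilde{\mathbb C}$ consists of classes of real moderate nets; $\mathrm d\rho:=[\rho_\varepsilon]$, $|[z_\varepsilon]|:=[|z_\varepsilon|]$. On $\widetilde{\mathbb R}$: $[x_\varepsilon]\le[y_\varepsilon]$ iff $x_\varepsilon\le y_\varepsilon+z_\varepsilon$ $\forall^0\varepsilon$ for some negligible $(z_\varepsilon)$; $x<y$ iff $\exists m\,\forall^0\varepsilon:y_\varepsilon-x_\varepsilon>\rho_\varepsilon^m$; $\widetilde{\mathbb R}_{>0}:=\{x:x>0\}$.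 The sharp topology on $\widetilde{\mathbb C}$ is generated by $B_r(c):=\{z:|z-c|<r\}$, $r\in\widetilde{\mathbb R}_{>0}$. Hypernatural numbers: $\widetilde{\mathbb N}:=\{[n_\varepsilon]\in\widetilde{\mathbb R}:n_\varepsilon\in\mathbb N\ \forall\varepsilon\}$; for each $N\in\widetilde{\mathbb N}$ a representative $(\mathrm{ni}(N)_\varepsilon)$ with all $\mathrm{ni}(N)_\varepsilon\in\mathbb N$ is fixed. Hyperlimit: $l=\lim_{n\in\widetilde{\mathbb N}}a_n$ means $\forall q\,\exists M\in\widetilde{\mathbb N}\,\forall n\in\widetilde{\mathbb N}:n\ge M\Rightarrow|a_n-l|<\mathrm d\rho^q$. Hyperseries: a net $(a_{n\varepsilon})_{n\in\mathbb N,\varepsilon\in I}$ is moderate over hypersums if for every $N\in\widetilde{\mathbb N}$ the net $(\sum_{n=0}^{\mathrm{ni}(N)_\varepsilon}a_{n\varepsilon})_\varepsilon$ is $\rho$-moderate; two such nets are equivalent if for all $N,M\in\widetilde{\mathbb N}$ the net $(\sum_{n=\mathrm{ni}(N)_\varepsilon}^{\mathrm{ni}(M)_\varepsilon}(a_{n\varepsilon}-\bar a_{n\varepsilon}))_\varepsilon$ is negligible; the quotient is $\widetilde{\mathbb C}_{\mathrm s}$ with classes $[b_{n\varepsilon}]_{\mathrm s}$. $\sum_{n=N}^Mb_n:=[\sum_{n=\mathrm{ni}(N)_\varepsilon}^{\mathrm{ni}(M)_\varepsilon}b_{n\varepsilon}]$, and $\sum_{n\in\widetilde{\mathbb N}}b_n:=\lim_{N\in\widetilde{\mathbb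 N}}\sum_{n=0}^Nb_n$ when this exists. Coefficients: $\widetilde{\mathbb C}_{\mathrm c}$ is the set of weakly $\rho$-moderate nets $(a_{n\varepsilon})$ ($\exists Q,R\in\mathbb N\,\forall^0\varepsilon\,\forall n\in\mathbb N:|a_{n\varepsilon}|\le\rho_\varepsilon^{-nQ-R}$) modulo strong equivalence ($\forall q,r\,\forall^0\varepsilon\,\forall n:|a_{n\varepsilon}-\bar a_{n\varepsilon}|\le\rho_\varepsilon^{nq+r}$), classes $(a_n)_{\mathrm c}=[a_{n\varepsilon}]_{\mathrm c}$. $\widetilde{\mathbb R}_\infty:=(\mathbb R\cup\{\pm\infty\})^I/\sim_\rho$, and for $x\in\widetilde{\mathbb R}$, $y\in\widetilde{\mathbb R}_\infty$, $x<y$ iff $\exists m\,\forall^0\varepsilon:y_\varepsilon>x_\varepsilon+\rho_\varepsilon^m$. Radius: $\mathrm{rad}(a_n)_{\mathrm c}:=[(\limsup_n|a_{n\varepsilon}|^{1/n})^{-1}]\in\widetilde{\mathbb R}_\infty$. Set of convergence: $S((a_n)_{\mathrm c},c)$ is the set of $z\in\widetilde{\mathbb C}$ with $|z-c|<\mathrm{rad}(a_n)_{\mathrm c}$ for which there exist representatives $z=[z_\varepsilon]$, $c=[c_\varepsilon]$, $(a_n)_{\mathrm c}=[a_{n\varepsilon}]_{\mathrm c}$ such that: (a) the net $(a_{n\varepsilon}(z_\varepsilon-c_\varepsilon)^n)_{n,\varepsilon}$ is moderate over hypersums; (b) $\sum_{n\in\widetilde{\mathbb N}}a_n(z-c)^n$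 converges and equals $[\sum_{n=0}^{\infty}a_{n\varepsilon}(z_\varepsilon-c_\varepsilon)^n]$; (c) for every representative $z=[\hat z_\varepsilon]$, the net $(\sum_{n\ge1}na_{n\varepsilon}(\hat z_\varepsilon-c_\varepsilon)^{n-1})_\varepsilon$ is $\rho$-moderate. Generalized holomorphic functions: for $U\subseteq\widetilde{\mathbb C}$ sharply open, $f:U\to\widetilde{\mathbb C}$ is a GHF if there exist open sets $\Omega_\varepsilon\subseteq\mathbb C$ and holomorphic $f_\varepsilon:\Omega_\varepsilon\to\mathbb C$ such that for every $z\in U$ and every representative $z=[z_\varepsilon]$: $z_\varepsilon\in\Omega_\varepsilon$ $\forall^0\varepsilon$, $f(z)=[f_\varepsilon(z_\varepsilon)]$, and $(f_\varepsilon^{(k)}(z_\varepsilon))\in\mathbb C_\rho$ for all $k\in\mathbb N$; $f^{(k)}(z):=[f^{(k)}_\varepsilon(z_\varepsilon)]$. Generalized entire: $f:\widetilde{\mathbb C}\to\widetilde{\mathbb C}$ is generalized entire (at $c$) if there are $c\in\widetilde{\mathbb C}$ and $(a_n)_{\mathrm c}\in\widetilde{\mathbb C}_{\mathrm c}$ with $S((a_n)_{\mathrm c},c)=\widetilde{\mathbb C}$ and $f(z)=\sum_{n\in\widetilde{\mathbb N}}a_n(z-c)^n$ for all $z\in\widetilde{\mathbb C}$. *)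

theory Defs
  imports "HOL-Complex_Analysis.Complex_Analysis"
begin

text \<open>Nets are functions real => complex (only values on I = (0,1] matter);
  generalized numbers are equivalence classes, i.e. sets of nets.
  Everything is parametric in the gauge rho.\<close>

type_synonym net = "real \<Rightarrow> complex"
type_synonym gnum = "net set"

definition ev :: "(real \<Rightarrow> bool) \<Rightarrow> bool" where
  "ev P \<longleftrightarrow> eventually P (at_right (0::real))"

definition moderate :: "(real \<Rightarrow> real) \<Rightarrow> net \<Rightarrow> bool" where
  "moderate \<rho> x \<longleftrightarrow> (\<exists>N::nat. ev (\<lambda>e. norm (x e) \<le> inverse (\<rho> e ^ N)))"

definition negligible :: "(real \<Rightarrow> real) \<Rightarrow> net \<Rightarrow> bool" where
  "negligible \<rho> x \<longleftrightarrow> (\<forall>q::nat. ev (\<lambda>e. norm (x e) \<le> \<rho> e ^ q))"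

definition cls :: "(real \<Rightarrow> real) \<Rightarrow> net \<Rightarrow> gnum" where
  "cls \<rho> x = {y. moderate \<rho> y \<and> negligible \<rho> (\<lambda>e. y e - x e)}"

definition Ct :: "(real \<Rightarrow> real) \<Rightarrow> gnum set" where
  "Ct \<rho> = cls \<rho> ` {x. moderate \<rho> x}"

definition Rt :: "(real \<Rightarrow> real) \<Rightarrow> gnum set" where
  "Rt \<rho> = cls \<rho> ` {x. moderate \<rho> x \<and> (\<forall>e. x e \<in> \<real>)}"

definition glt :: "(real \<Rightarrow> real) \<Rightarrow> gnum \<Rightarrow> gnum \<Rightarrow> bool" where
  "glt \<rho> X Y \<longleftrightarrow> (\<exists>x\<in>X. \<exists>y\<in>Y. \<exists>m::nat. ev (\<lambda>e. Re (y e) - Re (x e) > \<rho> e ^ m))"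

definition gle :: "(real \<Rightarrow> real) \<Rightarrow> gnum \<Rightarrow> gnum \<Rightarrow> bool" where
  "gle \<rho> X Y \<longleftrightarrow> (\<exists>x\<in>X. \<exists>y\<in>Y. \<exists>z. negligible \<rho> z \<and>
       ev (\<lambda>e. Re (x e) \<le> Re (y e) + Re (z e)))"

definition Rpos :: "(real \<Rightarrow> real) \<Rightarrow> gnum set" where
  "Rpos \<rho> = {X \<in> Rt \<rho>. glt \<rho> (cls \<rho> (\<lambda>_. 0)) X}"

definition gabs :: "(real \<Rightarrow> real) \<Rightarrow> gnum \<Rightarrow> gnum" where
  "gabs \<rho> X = (\<Union>x\<in>X. cls \<rho> (\<lambda>e. complex_of_real (norm (x e))))"

definition gsub :: "(real \<Rightarrow> real) \<Rightarrow> gnum \<Rightarrow> gnum \<Rightarrow> gnum" where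
  "gsub \<rho> X Y = (\<Union>x\<in>X. \<Union>y\<in>Y. cls \<rho> (\<lambda>e. x e - y e))"

definition drho_pow :: "(real \<Rightarrow> real) \<Rightarrow> nat \<Rightarrow> gnum" where
  "drho_pow \<rho> q = cls \<rho> (\<lambda>e. complex_of_real (\<rho> e ^ q))"

definition Nt :: "(real \<Rightarrow> real) \<Rightarrow> gnum set" where
  "Nt \<rho> = {N \<in> Rt \<rho>. \<exists>n::real \<Rightarrow> nat. (\<lambda>e. of_nat (n e)) \<in> N}"

definition hyperlim :: "(real \<Rightarrow> real) \<Rightarrow> (gnum \<Rightarrow> gnum) \<Rightarrow> gnum \<Rightarrow> bool" where
  "hyperlim \<rho> a l \<longleftrightarrow> (\<forall>q::nat. \<exists>M\<in>Nt \<rho>. \<forall>n\<in>Nt \<rho>.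
      gle \<rho> M n \<longrightarrow> glt \<rho> (gabs \<rho> (gsub \<rho> (a n) l)) (drho_pow \<rho> q))"

definition mod_hs :: "(real \<Rightarrow> real) \<Rightarrow> (gnum \<Rightarrow> real \<Rightarrow> nat) \<Rightarrow> (nat \<Rightarrow> net) \<Rightarrow> bool" where
  "mod_hs \<rho> ni b \<longleftrightarrow> (\<forall>N\<in>Nt \<rho>. moderate \<rho> (\<lambda>e. \<Sum>n\<le>ni N e. b n e))"

definition hps :: "(real \<Rightarrow> real) \<Rightarrow> (gnum \<Rightarrow> real \<Rightarrow> nat) \<Rightarrow> (nat \<Rightarrow> net) \<Rightarrow> gnum \<Rightarrow> gnum" where
  "hps \<rho> ni b N = cls \<rho> (\<lambda>e. \<Sum>n\<le>ni N e. b n e)"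

definition weakly_mod :: "(real \<Rightarrow> real) \<Rightarrow> (nat \<Rightarrow> net) \<Rightarrow> bool" where
  "weakly_mod \<rho> a \<longleftrightarrow> (\<exists>Q R::nat. ev (\<lambda>e. \<forall>n. norm (a n e) \<le> inverse (\<rho> e ^ (n*Q + R))))"

definition strong_eq :: "(real \<Rightarrow> real) \<Rightarrow> (nat \<Rightarrow> net) \<Rightarrow> (nat \<Rightarrow> net) \<Rightarrow> bool" where
  "strong_eq \<rho> a b \<longleftrightarrow> (\<forall>q r::nat. ev (\<lambda>e. \<forall>n. norm (a n e - b n e) \<le> \<rho> e ^ (n*q + r)))"

definition ccls :: "(real \<Rightarrow> real) \<Rightarrow> (nat \<Rightarrow> net) \<Rightarrow> (nat \<Rightarrow> net) set" where
  "ccls \<rho> a = {b. weakly_mod \<rho> b \<and> strong_eq \<rho> a b}"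

definition Cc :: "(real \<Rightarrow> real) \<Rightarrow> (nat \<Rightarrow> net) set set" where
  "Cc \<rho> = ccls \<rho> ` {a. weakly_mod \<rho> a}"

definition radn :: "(nat \<Rightarrow> net) \<Rightarrow> real \<Rightarrow> ereal" where
  "radn a e = inverse (limsup (\<lambda>n. ereal (root n (norm (a n e)))))"

text \<open>Representatives witnessing membership of z in the set of convergence S(A,c).\<close>
definition S_reps :: "(real \<Rightarrow> real) \<Rightarrow> (gnum \<Rightarrow> real \<Rightarrow> nat) \<Rightarrow> (nat \<Rightarrow> net) set \<Rightarrow> gnum \<Rightarrow> gnum
     \<Rightarrow> net \<Rightarrow> net \<Rightarrow> (nat \<Rightarrow> net) \<Rightarrow> bool" where
  "S_reps \<rho> ni A c z zr cr ar \<longleftrightarrow>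
     zr \<in> z \<and> cr \<in> c \<and> ar \<in> A \<and>
     (\<exists>m::nat. ev (\<lambda>e. radn ar e > ereal (norm (zr e - cr e) + \<rho> e ^ m))) \<and>
     mod_hs \<rho> ni (\<lambda>n e. ar n e * (zr e - cr e) ^ n) \<and>
     hyperlim \<rho> (hps \<rho> ni (\<lambda>n e. ar n e * (zr e - cr e) ^ n))
        (cls \<rho> (\<lambda>e. \<Sum>n. ar n e * (zr e - cr e) ^ n)) \<and>
     (\<forall>zh\<in>z. moderate \<rho> (\<lambda>e. \<Sum>n. of_nat (n+1) * ar (n+1) e * (zh e - cr e) ^ n))"

definition Sconv :: "(real \<Rightarrow> real) \<Rightarrow> (gnum \<Rightarrow> real \<Rightarrow> nat) \<Rightarrow> (nat \<Rightarrow> net) set \<Rightarrow> gnum \<Rightarrow> gnum set" where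
  "Sconv \<rho> ni A c = {z \<in> Ct \<rho>. \<exists>zr cr ar. S_reps \<rho> ni A c z zr cr ar}"

definition ghf :: "(real \<Rightarrow> real) \<Rightarrow> gnum set \<Rightarrow> (gnum \<Rightarrow> gnum) \<Rightarrow> bool" where
  "ghf \<rho> U f \<longleftrightarrow> (\<exists>\<Omega> F. (\<forall>e. open (\<Omega> e) \<and> F e holomorphic_on \<Omega> e) \<and>
     (\<forall>z\<in>U. \<forall>zr\<in>z. ev (\<lambda>e. zr e \<in> \<Omega> e) \<and> f z = cls \<rho> (\<lambda>e. F e (zr e)) \<and>
        (\<forall>k. moderate \<rho> (\<lambda>e. (deriv ^^ k) (F e) (zr e)))))"

definition gen_entire :: "(real \<Rightarrow> real) \<Rightarrow> (gnum \<Rightarrow> real \<Rightarrow> nat) \<Rightarrow> (gnum \<Rightarrow> gnum) \<Rightarrow> bool" where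
  "gen_entire \<rho> ni f \<longleftrightarrow> (\<exists>c\<in>Ct \<rho>. \<exists>A\<in>Cc \<rho>. Sconv \<rho> ni A c = Ct \<rho> \<and>
     (\<forall>z\<in>Ct \<rho>. \<exists>zr cr ar. S_reps \<rho> ni A c z zr cr ar \<and>
        hyperlim \<rho> (hps \<rho> ni (\<lambda>n e. ar n e * (zr e - cr e) ^ n)) (f z)))"

end

theory Submission imports Defs begin

lemma cauchy_lip:
  fixes F :: "complex \<Rightarrow> complex"
  assumes hol: "F holomorphic_on S" and op: "open S" and sub: "cball 0 R \<subseteq> S"
    and bd: "\<And>u. norm u \<le> R \<Longrightarrow> norm (F u) \<le> B" and R: "R > 0"
    and z: "norm z \<le> R/2" and w: "norm w \<le> R/2"
  shows "norm (F z - F w) \<le> 2*B/R * norm (z - w)"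
proof (rule field_differentiable_bound[where S="cball 0 (R/2)" and f'="deriv F"])
  show "convex (cball (0::complex) (R/2))" by simp
  fix x :: complex assume x: "x \<in> cball 0 (R/2)"
  have cs: "cball x (R/2) \<subseteq> cball 0 R"
  proof
    fix y assume "y \<in> cball x (R/2)"
    then have "norm (y - x) \<le> R/2" by (simp add: dist_norm norm_minus_commute)
    moreover have "norm x \<le> R/2" using x by simp
    ultimately have "norm y \<le> R" using norm_triangle_ineq[of "y-x" x] by simp
    then show "y \<in> cball 0 R" by simp
  qed
  have xS: "x \<in> S" using x sub R by auto
  show "(F has_field_derivative deriv F x) (at x within cball 0 (R/2))"
    using holomorphic_derivI[OF hol op xS] .
  have h1: "F holomorphic_on ball x (R/2)" using hol cs sub ball_subset_cball
    by (meson holomorphic_on_subset order_trans)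
  have c1: "continuous_on (cball x (R/2)) F"
    using holomorphic_on_imp_continuous_on[OF hol] cs sub continuous_on_subset by blast
  have "norm ((deriv ^^ 1) F x) \<le> fact 1 * B / (R/2)^1"
    apply (rule Cauchy_inequality[OF h1 c1])
    using R apply simp
  proof -
    fix u assume "norm (x - u) = R/2"
    then have "u \<in> cball x (R/2)" by (simp add: dist_norm)
    then have "u \<in> cball 0 R" using cs by blast
    then show "norm (F u) \<le> B" using bd by simp
  qed
  then show "norm (deriv F x) \<le> 2*B/R" by (simp add: mult.commute)
qed (use z w in auto)


lemma ev_mono: "ev P \<Longrightarrow> (\<And>e. P e \<Longrightarrow> Q e) \<Longrightarrow> ev Q"
  unfolding ev_def by (rule eventually_mono)

lemma ev_conj: "ev P \<Longrightarrow> ev Q \<Longrightarrow> ev (\<lambda>e. P e \<and> Q e)"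
  unfolding ev_def by (rule eventually_conj)

lemma neg_le1: "negligible \<rho> x \<Longrightarrow> ev (\<lambda>e. norm (x e) \<le> 1)"
  unfolding negligible_def by (drule spec[of _ 0]) simp

lemma G_ev:
  fixes \<rho> :: "real \<Rightarrow> real"
  assumes "(\<rho> \<longlongrightarrow> 0) (at_right 0)" and "\<forall>e. 0 < e \<and> e \<le> 1 \<longrightarrow> 0 < \<rho> e \<and> \<rho> e \<le> 1"
  shows "ev (\<lambda>e. 0 < \<rho> e \<and> \<rho> e \<le> 1/16)"
proof -
  have "eventually (\<lambda>e. \<rho> e < 1/16) (at_right (0::real))"
    by (rule order_tendstoD(2)[OF assms(1)]) simp
  moreover have "eventually (\<lambda>e::real. 0 < e \<and> e \<le> 1) (at_right 0)"
    unfolding eventually_at_right_field by (rule exI[of _ 1]) auto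
  ultimately show ?thesis unfolding ev_def
    by eventually_elim (use assms(2) in auto)
qed

lemma neg_add:
  assumes G: "ev (\<lambda>e. 0 < \<rho> e \<and> \<rho> e \<le> 1/16)"
    and a: "negligible \<rho> a" and b: "negligible \<rho> b"
  shows "negligible \<rho> (\<lambda>e. a e + b e)"
  unfolding negligible_def
proof
  fix q
  have A: "ev (\<lambda>e. norm (a e) \<le> \<rho> e ^ Suc q)" and B: "ev (\<lambda>e. norm (b e) \<le> \<rho> e ^ Suc q)"
    using a b unfolding negligible_def by blast+
  have "ev (\<lambda>e. (0 < \<rho> e \<and> \<rho> e \<le> 1/16) \<and> norm (a e) \<le> \<rho> e ^ Suc q \<and> norm (b e) \<le> \<rho> e ^ Suc q)"
    by (rule ev_conj[OF G ev_conj[OF A B]])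
  then show "ev (\<lambda>e. norm (a e + b e) \<le> \<rho> e ^ q)"
  proof (rule ev_mono)
    fix e assume h: "(0 < \<rho> e \<and> \<rho> e \<le> 1/16) \<and> norm (a e) \<le> \<rho> e ^ Suc q \<and> norm (b e) \<le> \<rho> e ^ Suc q"
    have "norm (a e + b e) \<le> 2 * \<rho> e ^ Suc q" using h norm_triangle_ineq[of "a e" "b e"] by simp
    also have "\<dots> = (2 * \<rho> e) * \<rho> e ^ q" by simp
    also have "\<dots> \<le> 1 * \<rho> e ^ q" using h by (intro mult_right_mono) auto
    finally show "norm (a e + b e) \<le> \<rho> e ^ q" by simp
  qed
qed

lemma neg_minus: "negligible \<rho> a \<Longrightarrow> negligible \<rho> (\<lambda>e. - a e)"
  unfolding negligible_def by simp

lemma neg_zero: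
  assumes G: "ev (\<lambda>e. 0 < \<rho> e \<and> \<rho> e \<le> 1/16)"
  shows "negligible \<rho> (\<lambda>e. 0)"
  unfolding negligible_def using G by (auto elim: ev_mono)

lemma self_cls:
  assumes G: "ev (\<lambda>e. 0 < \<rho> e \<and> \<rho> e \<le> 1/16)" and "moderate \<rho> x"
  shows "x \<in> cls \<rho> x"
  using assms neg_zero[OF G] unfolding cls_def by simp

lemma cls_eq:
  assumes G: "ev (\<lambda>e. 0 < \<rho> e \<and> \<rho> e \<le> 1/16)" and n: "negligible \<rho> (\<lambda>e. a e - b e)"
  shows "cls \<rho> a = cls \<rho> b"
proof -
  have n2: "negligible \<rho> (\<lambda>e. b e - a e)" using neg_minus[OF n] by simp
  have 1: "negligible \<rho> (\<lambda>e. y e - b e)" if "negligible \<rho> (\<lambda>e. y e - a e)" for y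
    using neg_add[OF G that n] by simp
  have 2: "negligible \<rho> (\<lambda>e. y e - a e)" if "negligible \<rho> (\<lambda>e. y e - b e)" for y
    using neg_add[OF G that n2] by simp
  show ?thesis unfolding cls_def using 1 2 by blast
qed


lemma arith_final:
  fixes r B nz nw nzw :: real
  assumes r: "0 < r" "r \<le> 1/16"
    and B: "B \<le> inverse (r ^ K) + 3"
    and nzw: "nzw \<le> 2 * inverse (r ^ N0)"
    and N: "N = N0 + K + q + 4"
    and B0: "0 \<le> B" and nz0: "0 \<le> nzw"
  shows "2 * B / inverse (r ^ N) * nzw \<le> r ^ q"
proof -
  define s where "s = inverse r"
  have s: "16 \<le> s" using r unfolding s_def by (simp add: field_simps)
  have rs: "\<And>n. inverse (r ^ n) = s ^ n" unfolding s_def by (simp add: power_inverse)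
  have rs2: "\<And>n. r ^ n = inverse (s ^ n)" unfolding s_def using r by (simp add: power_inverse)
  have s1: "1 \<le> s ^ K" using s by simp
  have B4: "B \<le> 4 * s ^ K" using B s1 rs by simp
  have "2 * B / inverse (r ^ N) * nzw = 2 * B * nzw / s ^ N" using rs2 by (simp add: field_simps)
  also have "\<dots> \<le> 2 * (4 * s ^ K) * (2 * s ^ N0) / s ^ N"
    using B4 nzw rs B0 nz0 s by (intro divide_right_mono mult_mono) auto
  also have "\<dots> = 16 / (s ^ q * s ^ 4)"
    using s by (simp add: N power_add field_simps)
  also have "\<dots> \<le> 1 / s ^ q"
  proof -
    have "16 \<le> s ^ 4" using s power_mono[of 16 s 4] by simp
    then have "16 * s ^ q \<le> s ^ 4 * s ^ q" using s by (intro mult_right_mono) auto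
    then show ?thesis using s by (simp add: field_simps)
  qed
  also have "\<dots> = r ^ q" using rs2 by (simp add: divide_inverse)
  finally show ?thesis .
qed

theorem theorem3p4:
  fixes \<rho> :: "real \<Rightarrow> real" and ni :: "gnum \<Rightarrow> real \<Rightarrow> nat" and f :: "gnum \<Rightarrow> gnum"
  assumes gauge: "\<forall>e. 0 < e \<and> e \<le> 1 \<longrightarrow> 0 < \<rho> e \<and> \<rho> e \<le> 1"
    and gauge_lim: "(\<rho> \<longlongrightarrow> 0) (at_right 0)"
    and ni_rep: "\<forall>N\<in>Nt \<rho>. (\<lambda>e. of_nat (ni N e)) \<in> N"
    and hol: "ghf \<rho> (Ct \<rho>) f"
    and entire: "gen_entire \<rho> ni f"
    and bounded: "\<exists>M\<in>Rpos \<rho>. \<forall>z\<in>Ct \<rho>. glt \<rho> (gabs \<rho> (f z)) M"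
  shows "\<forall>z\<in>Ct \<rho>. \<forall>w\<in>Ct \<rho>. f z = f w"
proof -
  have G: "ev (\<lambda>e. 0 < \<rho> e \<and> \<rho> e \<le> 1/16)" by (rule G_ev[OF gauge_lim gauge])
  obtain \<Omega> F where OF: "\<forall>e. open (\<Omega> e) \<and> F e holomorphic_on \<Omega> e"
    and OF2: "\<forall>z\<in>Ct \<rho>. \<forall>zr\<in>z. ev (\<lambda>e. zr e \<in> \<Omega> e) \<and> f z = cls \<rho> (\<lambda>e. F e (zr e)) \<and>
        (\<forall>k. moderate \<rho> (\<lambda>e. (deriv ^^ k) (F e) (zr e)))"
    using hol unfolding ghf_def by blast
  obtain M where M: "M \<in> Rpos \<rho>" and Mb: "\<forall>z\<in>Ct \<rho>. glt \<rho> (gabs \<rho> (f z)) M"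
    using bounded by blast
  obtain y0 where My0: "M = cls \<rho> y0" and y0: "moderate \<rho> y0"
    using M unfolding Rpos_def Rt_def by blast
  obtain K where K: "ev (\<lambda>e. norm (y0 e) \<le> inverse (\<rho> e ^ K))"
    using y0 unfolding moderate_def by blast
  define B where "B e = norm (y0 e) + 3" for e
  have clsCt: "cls \<rho> u \<in> Ct \<rho>" if "moderate \<rho> u" for u
    using that unfolding Ct_def by blast
  have bound_at: "ev (\<lambda>e. u e \<in> \<Omega> e \<and> norm (F e (u e)) \<le> B e)" if u: "moderate \<rho> u" for u
  proof -
    have uin: "u \<in> cls \<rho> u" by (rule self_cls[OF G u])
    have e1: "ev (\<lambda>e. u e \<in> \<Omega> e)" and fu: "f (cls \<rho> u) = cls \<rho> (\<lambda>e. F e (u e))"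
      using OF2 clsCt[OF u] uin by blast+
    have "glt \<rho> (gabs \<rho> (cls \<rho> (\<lambda>e. F e (u e)))) M" using Mb clsCt[OF u] fu by metis
    then obtain a y m where a: "a \<in> gabs \<rho> (cls \<rho> (\<lambda>e. F e (u e)))" and y: "y \<in> M"
      and m: "ev (\<lambda>e. Re (y e) - Re (a e) > \<rho> e ^ m)"
      unfolding glt_def by blast
    obtain x where x: "x \<in> cls \<rho> (\<lambda>e. F e (u e))" and ax: "a \<in> cls \<rho> (\<lambda>e. complex_of_real (norm (x e)))"
      using a unfolding gabs_def by blast
    have n1: "ev (\<lambda>e. norm (x e - F e (u e)) \<le> 1)" using x unfolding cls_def by (auto intro: neg_le1)
    have n2: "ev (\<lambda>e. norm (a e - complex_of_real (norm (x e))) \<le> 1)" using ax unfolding cls_def by (auto intro: neg_le1)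
    have n3: "ev (\<lambda>e. norm (y e - y0 e) \<le> 1)" using y My0 unfolding cls_def by (auto intro: neg_le1)
    have "ev (\<lambda>e. (0 < \<rho> e \<and> \<rho> e \<le> 1/16) \<and> (Re (y e) - Re (a e) > \<rho> e ^ m) \<and>
        norm (x e - F e (u e)) \<le> 1 \<and> norm (a e - complex_of_real (norm (x e))) \<le> 1 \<and>
        norm (y e - y0 e) \<le> 1 \<and> u e \<in> \<Omega> e)"
      by (rule ev_conj[OF G ev_conj[OF m ev_conj[OF n1 ev_conj[OF n2 ev_conj[OF n3 e1]]]]])
    then show ?thesis
    proof (rule ev_mono)
      fix e assume h: "(0 < \<rho> e \<and> \<rho> e \<le> 1/16) \<and> (Re (y e) - Re (a e) > \<rho> e ^ m) \<and>
        norm (x e - F e (u e)) \<le> 1 \<and> norm (a e - complex_of_real (norm (x e))) \<le> 1 \<and>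
        norm (y e - y0 e) \<le> 1 \<and> u e \<in> \<Omega> e"
      have "norm (F e (u e)) \<le> norm (x e) + norm (x e - F e (u e))"
        using norm_triangle_ineq4[of "x e" "x e - F e (u e)"] by simp
      moreover have "norm (x e) - Re (a e) \<le> 1"
        using abs_Re_le_cmod[of "a e - complex_of_real (norm (x e))"] h by (simp add: abs_le_iff)
      moreover have "Re (y e) - Re (y0 e) \<le> 1"
        using abs_Re_le_cmod[of "y e - y0 e"] h by (simp add: abs_le_iff)
      moreover have "Re (y0 e) \<le> norm (y0 e)" by (rule complex_Re_le_cmod)
      moreover have "0 < \<rho> e ^ m" using h by simp
      ultimately show "u e \<in> \<Omega> e \<and> norm (F e (u e)) \<le> B e" using h unfolding B_def by linarith
    qed
  qed
  have uniform: "ev (\<lambda>e. \<forall>v. norm v \<le> inverse (\<rho> e ^ N) \<longrightarrow> v \<in> \<Omega> e \<and> norm (F e v) \<le> B e)" for N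
  proof -
    define bad where "bad e v \<longleftrightarrow> norm v \<le> inverse (\<rho> e ^ N) \<and> \<not> (v \<in> \<Omega> e \<and> norm (F e v) \<le> B e)" for e v
    define u where "u e = (if \<exists>v. bad e v then SOME v. bad e v else 0)" for e
    have ubad: "bad e (u e)" if "\<exists>v. bad e v" for e
      using that someI_ex[OF that] unfolding u_def by simp
    have "moderate \<rho> u" unfolding moderate_def
    proof (intro exI[of _ N])
      show "ev (\<lambda>e. norm (u e) \<le> inverse (\<rho> e ^ N))"
        using G
      proof (rule ev_mono)
        fix e assume "0 < \<rho> e \<and> \<rho> e \<le> 1/16"
        then show "norm (u e) \<le> inverse (\<rho> e ^ N)"
          using ubad[of e] unfolding bad_def u_def by (cases "\<exists>v. bad e v") (auto simp: bad_def)
      qed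
    qed
    from bound_at[OF this] show ?thesis
    proof (rule ev_mono)
      fix e assume "u e \<in> \<Omega> e \<and> norm (F e (u e)) \<le> B e"
      then have "\<not> (\<exists>v. bad e v)" using ubad[of e] unfolding bad_def by blast
      then show "\<forall>v. norm v \<le> inverse (\<rho> e ^ N) \<longrightarrow> v \<in> \<Omega> e \<and> norm (F e v) \<le> B e"
        unfolding bad_def by blast
    qed
  qed
  have modle: "ev (\<lambda>e. norm (zr e) \<le> inverse (\<rho> e ^ (N1 + N2)))"
    if "ev (\<lambda>e. norm (zr e) \<le> inverse (\<rho> e ^ N1))" for zr N1 N2
    using ev_conj[OF G that]
  proof (rule ev_mono)
    fix e assume h: "(0 < \<rho> e \<and> \<rho> e \<le> 1/16) \<and> norm (zr e) \<le> inverse (\<rho> e ^ N1)"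
    have "\<rho> e ^ (N1 + N2) \<le> \<rho> e ^ N1" using h by (intro power_decreasing) auto
    then have "inverse (\<rho> e ^ N1) \<le> inverse (\<rho> e ^ (N1 + N2))" using h
      by (intro le_imp_inverse_le) auto
    then show "norm (zr e) \<le> inverse (\<rho> e ^ (N1 + N2))" using h by linarith
  qed
  show ?thesis
  proof (intro ballI)
    fix z w assume z: "z \<in> Ct \<rho>" and w: "w \<in> Ct \<rho>"
    obtain zr where zr: "z = cls \<rho> zr" "moderate \<rho> zr" using z unfolding Ct_def by blast
    obtain wr where wr: "w = cls \<rho> wr" "moderate \<rho> wr" using w unfolding Ct_def by blast
    have fz: "f z = cls \<rho> (\<lambda>e. F e (zr e))" using OF2 z self_cls[OF G zr(2)] zr(1) by blast
    have fw: "f w = cls \<rho> (\<lambda>e. F e (wr e))" using OF2 w self_cls[OF G wr(2)] wr(1) by blast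
    obtain N1 where N1: "ev (\<lambda>e. norm (zr e) \<le> inverse (\<rho> e ^ N1))" using zr(2) unfolding moderate_def by blast
    obtain N2 where N2: "ev (\<lambda>e. norm (wr e) \<le> inverse (\<rho> e ^ N2))" using wr(2) unfolding moderate_def by blast
    define N0 where "N0 = N1 + N2"
    have Z: "ev (\<lambda>e. norm (zr e) \<le> inverse (\<rho> e ^ N0))" unfolding N0_def by (rule modle[OF N1])
    have W: "ev (\<lambda>e. norm (wr e) \<le> inverse (\<rho> e ^ N0))" unfolding N0_def
      using modle[OF N2, of N1] by (simp add: add.commute)
    have "negligible \<rho> (\<lambda>e. F e (zr e) - F e (wr e))" unfolding negligible_def
    proof
      fix q
      define N where "N = N0 + K + q + 4"
      have "ev (\<lambda>e. (0 < \<rho> e \<and> \<rho> e \<le> 1/16) \<and> norm (zr e) \<le> inverse (\<rho> e ^ N0) \<and>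
          norm (wr e) \<le> inverse (\<rho> e ^ N0) \<and> norm (y0 e) \<le> inverse (\<rho> e ^ K) \<and>
          (\<forall>v. norm v \<le> inverse (\<rho> e ^ N) \<longrightarrow> v \<in> \<Omega> e \<and> norm (F e v) \<le> B e))"
        by (rule ev_conj[OF G ev_conj[OF Z ev_conj[OF W ev_conj[OF K uniform]]]])
      then show "ev (\<lambda>e. norm (F e (zr e) - F e (wr e)) \<le> \<rho> e ^ q)"
      proof (rule ev_mono)
        fix e assume h: "(0 < \<rho> e \<and> \<rho> e \<le> 1/16) \<and> norm (zr e) \<le> inverse (\<rho> e ^ N0) \<and>
          norm (wr e) \<le> inverse (\<rho> e ^ N0) \<and> norm (y0 e) \<le> inverse (\<rho> e ^ K) \<and>
          (\<forall>v. norm v \<le> inverse (\<rho> e ^ N) \<longrightarrow> v \<in> \<Omega> e \<and> norm (F e v) \<le> B e)"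
        define r where "r = \<rho> e"
        have r: "0 < r" "r \<le> 1/16" using h r_def by auto
        define R where "R = inverse (r ^ N)"
        have R0: "R > 0" using r R_def by simp
        have half: "inverse (r ^ N0) \<le> R/2"
        proof -
          have "r ^ N = r ^ N0 * r ^ (K + q + 4)" by (simp add: N_def power_add)
          also have "\<dots> \<le> r ^ N0 * r ^ 1" using r
            by (intro mult_left_mono power_decreasing) auto
          also have "\<dots> \<le> r ^ N0 * (1/2)" using r by (intro mult_left_mono) auto
          finally have "2 * r ^ N \<le> r ^ N0" by simp
          then show ?thesis using r unfolding R_def by (simp add: field_simps)
        qed
        have sub: "cball 0 R \<subseteq> \<Omega> e" using h unfolding R_def r_def by auto
        have bd: "\<And>v. norm v \<le> R \<Longrightarrow> norm (F e v) \<le> B e" using h unfolding R_def r_def by auto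
        have lip: "norm (F e (zr e) - F e (wr e)) \<le> 2 * B e / R * norm (zr e - wr e)"
          apply (rule cauchy_lip[OF _ _ sub bd R0])
          using OF h half r_def by auto
        have nzw: "norm (zr e - wr e) \<le> 2 * inverse (r ^ N0)"
          using norm_triangle_ineq4[of "zr e" "wr e"] h r_def by simp
        have "2 * B e / R * norm (zr e - wr e) \<le> r ^ q"
          unfolding R_def
          by (rule arith_final[OF r _ nzw N_def]) (use h r_def B_def in auto)
        then show "norm (F e (zr e) - F e (wr e)) \<le> \<rho> e ^ q" using lip r_def by simp
      qed
    qed
    then show "f z = f w" using fz fw cls_eq[OF G] by metis
  qed
qed

end
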